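(* The function $2^\omega\times\mathbf{K}\to[0;1]$, $(z,K)\mapsto\mathcal{D}^-_K(z)$, is of Baire class $2$ but not of Baire class $1$.
   Context: $2^{\omega}$ is the Cantor space; $N_s=\{x\in2^\omega:s\subset x\}$; $\mu$ is the coin-tossing measure, $\mu(N_s)=2^{-\mathrm{lh}(s)}$. $\mathbf{K}$ is the Polish space of compact subsets of $2^\omega$ with the Vietoris topology. $\mathcal{D}^-_K(z)=\liminf_{n\to\infty}\mu(K\cap N_{z\restriction n})/\mu(N_{z\restriction n})$. A function between metrizable spaces is of Baire class $\alpha$ if the preimage of every open set is in $\boldsymbol{\Sigma}^0_{\alpha+1}$. *)

theory Defs
  imports "HOL-Analysis.Analysis" "HOL-Probability.Probability"
begin

definition cantor_top :: "(nat \<Rightarrow> bool) topology" where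
  "cantor_top = product_topology (\<lambda>_. discrete_topology UNIV) UNIV"

definition coin :: "(nat \<Rightarrow> bool) measure" where
  "coin = (\<Pi>\<^sub>M i\<in>(UNIV::nat set). measure_pmf (bernoulli_pmf (1/2)))"

definition cyl :: "(nat \<Rightarrow> bool) \<Rightarrow> nat \<Rightarrow> (nat \<Rightarrow> bool) set" where
  "cyl z n = {x. \<forall>i<n. x i = z i}"

definition lower_density :: "(nat \<Rightarrow> bool) set \<Rightarrow> (nat \<Rightarrow> bool) \<Rightarrow> real" where
  "lower_density K z = real_of_ereal (liminf (\<lambda>n. ereal
      (measure coin (K \<inter> cyl z n) / measure coin (cyl z n))))"

definition vietoris :: "'a topology \<Rightarrow> 'a set topology" where
  "vietoris T = topology_generated_by
     ({{K. compactin T K \<and> K \<subseteq> U} | U. openin T U} \<union>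
      {{K. compactin T K \<and> K \<inter> U \<noteq> {}} | U. openin T U})"

fun sigma0 :: "'a topology \<Rightarrow> nat \<Rightarrow> 'a set set" where
  "sigma0 X 0 = {}"
| "sigma0 X (Suc 0) = {U. openin X U}"
| "sigma0 X (Suc (Suc n)) =
     {\<Union>(range A) | A :: nat \<Rightarrow> 'a set. \<forall>i. A i \<subseteq> topspace X \<and> topspace X - A i \<in> sigma0 X (Suc n)}"

definition baire_class :: "'a topology \<Rightarrow> nat \<Rightarrow> ('a \<Rightarrow> real) \<Rightarrow> bool" where
  "baire_class X \<alpha> f \<longleftrightarrow>
     (\<forall>U. open U \<longrightarrow> {x \<in> topspace X. f x \<in> U} \<in> sigma0 X (Suc \<alpha>))"

end

theory Submission
  imports Defs
begin


abbreviation "XX \<equiv> prod_topology cantor_top (vietoris cantor_top)"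

lemma topspace_cantor[simp]: "topspace cantor_top = UNIV"
  by (auto simp: cantor_top_def PiE_def extensional_def)

lemma cyl_open: "openin cantor_top (cyl z n)"
  unfolding cantor_top_def openin_product_topology_alt
proof (intro ballI)
  fix x assume x: "x \<in> cyl z n"
  let ?U = "\<lambda>i. if i < n then {z i} else (UNIV::bool set)"
  have "finite {i \<in> UNIV. ?U i \<noteq> topspace (discrete_topology UNIV)}"
    by (rule finite_subset[of _ "{..<n}"]) auto
  moreover have "x \<in> Pi\<^sub>E UNIV ?U" using x by (auto simp: cyl_def)
  moreover have "Pi\<^sub>E UNIV ?U \<subseteq> cyl z n"
  proof
    fix y assume "y \<in> Pi\<^sub>E UNIV ?U"
    then have h: "\<And>i. y i \<in> ?U i" by (simp add: PiE_iff)
    show "y \<in> cyl z n" unfolding cyl_def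
    proof (clarify)
      fix i assume "i < n"
      then have "y i \<in> {z i}" using h[of i] by simp
      then show "y i = z i" by simp
    qed
  qed
  ultimately show "\<exists>U. finite {i \<in> UNIV. U i \<noteq> topspace (discrete_topology UNIV)} \<and>
          (\<forall>i\<in>UNIV. openin (discrete_topology UNIV) (U i)) \<and> x \<in> Pi\<^sub>E UNIV U \<and> Pi\<^sub>E UNIV U \<subseteq> cyl z n"
    by (intro exI[of _ ?U]) auto
qed

lemma open_cyl_sub:
  assumes "openin cantor_top U" "x \<in> U" shows "\<exists>m. cyl x m \<subseteq> U"
proof -
  obtain V where V: "finite {i \<in> UNIV. V i \<noteq> topspace (discrete_topology (UNIV::bool set))}"
     "x \<in> Pi\<^sub>E UNIV V" "Pi\<^sub>E UNIV V \<subseteq> U"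
    using assms unfolding cantor_top_def openin_product_topology_alt by metis
  define F where "F = {i. V i \<noteq> UNIV}"
  have F: "finite F" using V(1) by (simp add: F_def)
  define m where "m = Suc (Max (insert 0 F))"
  have "cyl x m \<subseteq> Pi\<^sub>E UNIV V"
  proof
    fix y assume y: "y \<in> cyl x m"
    show "y \<in> Pi\<^sub>E UNIV V"
    proof (clarsimp simp: PiE_iff)
      fix i show "y i \<in> V i"
      proof (cases "i < m")
        case True then show ?thesis using y V(2) by (auto simp: cyl_def PiE_iff)
      next
        case False
        then have "i \<notin> F" using F unfolding m_def
          by (metis Max_ge finite_insert insertI2 less_Suc_eq_le)
        then show ?thesis by (auto simp: F_def)
      qed
    qed
  qed
  then show ?thesis using V(3) by blast
qed

lemma compact_cantor: "compact_space cantor_top"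
  unfolding cantor_top_def compact_space_product_topology
  by (simp add: compact_space_discrete_topology)

lemma hausdorff_cantor: "Hausdorff_space cantor_top"
  unfolding cantor_top_def Hausdorff_space_product_topology by simp

lemma compactin_cantor: "compactin cantor_top K \<longleftrightarrow> closedin cantor_top K"
  using compact_cantor hausdorff_cantor closedin_compact_space compactin_imp_closedin by blast

definition hl :: "nat \<Rightarrow> (nat \<Rightarrow> bool) set \<Rightarrow> (nat \<Rightarrow> bool) set" where
  "hl m K = {y. \<exists>k\<in>K. \<forall>i<m. y i = k i}"

lemma hl_Union: "hl m K = \<Union> ((\<lambda>k. cyl k m) ` K)"
  by (auto simp: hl_def cyl_def)

lemma hl_open: "openin cantor_top (hl m K)"
  unfolding hl_Union by (rule openin_Union) (auto intro: cyl_open)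

lemma hl_sub: "K \<subseteq> hl m K"
  by (auto simp: hl_def)

lemma hl_Suc: "hl (Suc m) K \<subseteq> hl m K"
  by (auto simp: hl_def)

lemma hl_dec: "decseq (\<lambda>m. hl m K)"
  by (intro decseq_SucI hl_Suc)

lemma hl_inter:
  assumes "closedin cantor_top K" shows "(\<Inter>m. hl m K) = K"
proof
  show "K \<subseteq> (\<Inter>m. hl m K)"
  proof (rule INT_greatest)
    fix m show "K \<subseteq> hl m K" by (rule hl_sub)
  qed
  show "(\<Inter>m. hl m K) \<subseteq> K"
  proof
    fix y assume y: "y \<in> (\<Inter>m. hl m K)"
    show "y \<in> K"
    proof (rule ccontr)
      assume yK: "y \<notin> K"
      have "openin cantor_top (UNIV - K)" using assms by (simp add: closedin_def)
      then obtain m where m: "cyl y m \<subseteq> UNIV - K" using open_cyl_sub yK by blast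
      have "y \<in> hl m K" using y by (rule INT_D) simp
      then obtain k where k: "k \<in> K" "\<forall>i<m. y i = k i" unfolding hl_def by blast
      then have "k \<in> cyl y m" unfolding cyl_def by simp
      then have "k \<notin> K" using m by blast
      then show False using k(1) by contradiction
    qed
  qed
qed

lemma cyl_finite: "finite ((\<lambda>k. cyl k m) ` K)"
proof (rule finite_subset)
  show "(\<lambda>k. cyl k m) ` K \<subseteq> (\<lambda>l. {x. \<forall>i<m. x i = l ! i}) ` {l::bool list. length l = m}"
  proof
    fix c assume "c \<in> (\<lambda>k. cyl k m) ` K"
    then obtain k where c: "c = cyl k m" by blast
    show "c \<in> (\<lambda>l. {x. \<forall>i<m. x i = l ! i}) ` {l::bool list. length l = m}"
    proof (rule image_eqI[of _ _ "map k [0..<m]"])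
      show "map k [0..<m] \<in> {l::bool list. length l = m}" by simp
      have "\<And>x. (\<forall>i<m. x i = k i) \<longleftrightarrow> (\<forall>i<m. x i = map k [0..<m] ! i)"
        by (simp add: nth_map)
      then show "c = {x. \<forall>i<m. x i = map k [0..<m] ! i}" unfolding c cyl_def by blast
    qed
  qed
  have "finite {xs::bool list. set xs \<subseteq> UNIV \<and> length xs = m}" by (rule finite_lists_length_eq) simp
  then have "finite {l::bool list. length l = m}" by simp
  then show "finite ((\<lambda>l. {x. \<forall>i<m. x i = l ! i}) ` {l::bool list. length l = m})"
    by (rule finite_imageI)
qed

lemma top_viet: "topspace (vietoris cantor_top) = {K. compactin cantor_top K}"
proof -
  let ?A = "{{K. compactin cantor_top K \<and> K \<subseteq> U} | U. openin cantor_top U}"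
  let ?B = "{{K. compactin cantor_top K \<and> K \<inter> U \<noteq> {}} | U. openin cantor_top U}"
  have "topspace (vietoris cantor_top) = \<Union>(?A \<union> ?B)"
    by (simp add: vietoris_def)
  also have "\<dots> = {K. compactin cantor_top K}"
  proof
    show "{K. compactin cantor_top K} \<subseteq> \<Union>(?A \<union> ?B)"
    proof
      fix K assume K: "K \<in> {K. compactin cantor_top K}"
      have "openin cantor_top UNIV" using openin_topspace[of cantor_top] by simp
      then have "{K. compactin cantor_top K \<and> K \<subseteq> UNIV} \<in> ?A" by blast
      moreover have "K \<in> {K. compactin cantor_top K \<and> K \<subseteq> UNIV}" using K by simp
      ultimately show "K \<in> \<Union>(?A \<union> ?B)" by (rule UnionI[OF UnI1])
    qed
    show "\<Union>(?A \<union> ?B) \<subseteq> {K. compactin cantor_top K}"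
    proof
      fix K assume "K \<in> \<Union>(?A \<union> ?B)"
      then obtain s where s: "s \<in> ?A \<union> ?B" "K \<in> s" by (rule UnionE)
      from s(1) obtain U where "s = {K. compactin cantor_top K \<and> K \<subseteq> U} \<or> s = {K. compactin cantor_top K \<and> K \<inter> U \<noteq> {}}"
        by blast
      then show "K \<in> {K. compactin cantor_top K}" using s(2) by blast
    qed
  qed
  finally show ?thesis .
qed

lemma viet_open1: "openin cantor_top U \<Longrightarrow> openin (vietoris cantor_top) {K. compactin cantor_top K \<and> K \<subseteq> U}"
  unfolding vietoris_def by (rule topology_generated_by_Basis) blast

lemma viet_open2: "openin cantor_top U \<Longrightarrow> openin (vietoris cantor_top) {K. compactin cantor_top K \<and> K \<inter> U \<noteq> {}}"
  unfolding vietoris_def by (rule topology_generated_by_Basis) blast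

lemma openin_Int_INT_finite:
  assumes "finite F" "openin X A" "\<And>c. c \<in> F \<Longrightarrow> openin X (B c)"
  shows "openin X (A \<inter> (\<Inter>c\<in>F. B c))"
  using assms
proof (induction F rule: finite_induct)
  case empty then show ?case by simp
next
  case (insert x F)
  have "A \<inter> (\<Inter>c\<in>insert x F. B c) = (A \<inter> (\<Inter>c\<in>F. B c)) \<inter> B x" by auto
  then show ?case using insert by (metis insertCI openin_Int)
qed

lemma hl_locconst:
  assumes K0: "compactin cantor_top K0"
  shows "\<exists>W. openin (vietoris cantor_top) W \<and> K0 \<in> W \<and> (\<forall>K\<in>W. hl m K = hl m K0)"
proof -
  define W where "W = {K. compactin cantor_top K \<and> K \<subseteq> hl m K0} \<inter>
      (\<Inter>c\<in>(\<lambda>k. cyl k m) ` K0. {K. compactin cantor_top K \<and> K \<inter> c \<noteq> {}})"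
  have "openin (vietoris cantor_top) W" unfolding W_def
  proof (rule openin_Int_INT_finite)
    show "finite ((\<lambda>k. cyl k m) ` K0)" by (rule cyl_finite)
    show "openin (vietoris cantor_top) {K. compactin cantor_top K \<and> K \<subseteq> hl m K0}"
      by (rule viet_open1[OF hl_open])
    fix c assume "c \<in> (\<lambda>k. cyl k m) ` K0"
    then obtain k where "c = cyl k m" by blast
    then show "openin (vietoris cantor_top) {K. compactin cantor_top K \<and> K \<inter> c \<noteq> {}}"
      using viet_open2[OF cyl_open] by simp
  qed
  moreover have "K0 \<in> W"
  proof -
    have "K0 \<inter> cyl k m \<noteq> {}" if "k \<in> K0" for k
    proof -
      have "k \<in> cyl k m" by (simp add: cyl_def)
      then show ?thesis using that by blast
    qed
    then show ?thesis unfolding W_def using K0 hl_sub[of K0 m] by blast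
  qed
  moreover have "\<forall>K\<in>W. hl m K = hl m K0"
  proof
    fix K assume K: "K \<in> W"
    show "hl m K = hl m K0"
    proof
      show "hl m K \<subseteq> hl m K0"
      proof
        fix y assume "y \<in> hl m K"
        then obtain k where k: "k \<in> K" "\<forall>i<m. y i = k i" by (auto simp: hl_def)
        then have "k \<in> hl m K0" using K unfolding W_def by blast
        then obtain k0 where "k0 \<in> K0" "\<forall>i<m. k i = k0 i" by (auto simp: hl_def)
        then show "y \<in> hl m K0" using k by (auto simp: hl_def)
      qed
      show "hl m K0 \<subseteq> hl m K"
      proof
        fix y assume "y \<in> hl m K0"
        then obtain k0 where k0: "k0 \<in> K0" "\<forall>i<m. y i = k0 i" by (auto simp: hl_def)
        then have "K \<inter> cyl k0 m \<noteq> {}" using K unfolding W_def by blast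
        then obtain k where "k \<in> K" "\<forall>i<m. k i = k0 i" by (auto simp: cyl_def)
        then show "y \<in> hl m K" using k0 by (auto simp: hl_def)
      qed
    qed
  qed
  ultimately show ?thesis by blast
qed

lemma cyl_eq: "z \<in> cyl z0 n \<Longrightarrow> cyl z n = cyl z0 n"
  by (auto simp: cyl_def)

lemma XX_locconst:
  assumes "p0 \<in> topspace XX"
  shows "\<exists>W. openin XX W \<and> p0 \<in> W \<and> (\<forall>p\<in>W. cyl (fst p) n = cyl (fst p0) n \<and> hl m (snd p) = hl m (snd p0))"
proof -
  obtain z0 K0 where p0: "p0 = (z0, K0)" by force
  have "K0 \<in> topspace (vietoris cantor_top)" using assms p0 by simp
  then have "compactin cantor_top K0" using top_viet by simp
  then obtain W where W: "openin (vietoris cantor_top) W" "K0 \<in> W" "\<forall>K\<in>W. hl m K = hl m K0"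
    using hl_locconst by blast
  have "openin XX (cyl z0 n \<times> W)"
    by (rule iffD2[OF openin_prod_Times_iff]) (use cyl_open W(1) in blast)
  moreover have "p0 \<in> cyl z0 n \<times> W" using W(2) unfolding p0 by (simp add: cyl_def)
  moreover have "\<forall>p\<in>cyl z0 n \<times> W. cyl (fst p) n = cyl (fst p0) n \<and> hl m (snd p) = hl m (snd p0)"
  proof
    fix p assume "p \<in> cyl z0 n \<times> W"
    then obtain z K where zK: "p = (z, K)" "z \<in> cyl z0 n" "K \<in> W" by blast
    have "cyl z n = cyl z0 n" by (rule cyl_eq[OF zK(2)])
    moreover have "hl m K = hl m K0" using W(3) zK(3) by blast
    ultimately show "cyl (fst p) n = cyl (fst p0) n \<and> hl m (snd p) = hl m (snd p0)"
      unfolding zK(1) p0 by simp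
  qed
  ultimately show ?thesis by blast
qed

lemma XX_open_pred: "openin XX {p \<in> topspace XX. P (cyl (fst p) n) (hl m (snd p))}"
proof (subst openin_subopen, intro ballI)
  fix p0 assume p0: "p0 \<in> {p \<in> topspace XX. P (cyl (fst p) n) (hl m (snd p))}"
  then obtain W where W: "openin XX W" "p0 \<in> W"
     "\<forall>p\<in>W. cyl (fst p) n = cyl (fst p0) n \<and> hl m (snd p) = hl m (snd p0)"
    using XX_locconst[of p0 n m] by blast
  have "W \<subseteq> {p \<in> topspace XX. P (cyl (fst p) n) (hl m (snd p))}"
  proof
    fix p assume p: "p \<in> W"
    have "p \<in> topspace XX" using openin_subset[OF W(1)] p by blast
    moreover have e: "cyl (fst p) n = cyl (fst p0) n" "hl m (snd p) = hl m (snd p0)"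
      using W(3) p by blast+
    moreover have "P (cyl (fst p0) n) (hl m (snd p0))" using p0 by blast
    ultimately show "p \<in> {p \<in> topspace XX. P (cyl (fst p) n) (hl m (snd p))}"
      by (simp only: mem_Collect_eq e)
  qed
  then show "\<exists>T. openin XX T \<and> p0 \<in> T \<and> T \<subseteq> {p \<in> topspace XX. P (cyl (fst p) n) (hl m (snd p))}"
    using W by blast
qed


abbreviation "Bern \<equiv> measure_pmf (bernoulli_pmf (1/2))"

lemma coin_prob: "prob_space coin"
  unfolding coin_def by (rule prob_space_PiM) (simp add: prob_space_measure_pmf)

interpretation C: prob_space coin by (rule coin_prob)

lemma cyl_emb: "cyl z n = prod_emb UNIV (\<lambda>_. Bern) {..<n} (\<Pi>\<^sub>E i\<in>{..<n}. {z i})"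
  unfolding cyl_def by (rule set_eqI) (simp add: prod_emb_iff restrict_PiE_iff Pi_iff, blast)

lemma cyl_sets: "cyl z n \<in> sets coin"
  unfolding cyl_emb coin_def by (rule sets_PiM_I) auto

lemma cyl_emeasure: "emeasure coin (cyl z n) = ennreal ((1/2)^n)"
proof -
  have "emeasure coin (cyl z n) = (\<Prod>i\<in>{..<n}. emeasure Bern {z i})"
    unfolding cyl_emb coin_def by (rule emeasure_PiM_emb) (auto simp: prob_space_measure_pmf)
  also have "\<dots> = (\<Prod>i\<in>{..<n}. ennreal (1/2))"
  proof (intro prod.cong refl)
    fix i show "emeasure Bern {z i} = ennreal (1/2)" by (cases "z i") (simp_all add: emeasure_pmf_single)
  qed
  also have "\<dots> = ennreal (1/2) ^ n" by simp
  also have "\<dots> = ennreal ((1/2)^n)" by (rule ennreal_power) simp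
  finally show ?thesis .
qed

lemma cyl_measure: "measure coin (cyl z n) = (1/2)^n"
  unfolding measure_def cyl_emeasure by simp

lemma cyl_pos: "measure coin (cyl z n) > 0"
  unfolding cyl_measure by simp

lemma hl_sets: "hl m K \<in> sets coin"
  unfolding hl_Union by (rule sets.finite_Union) (auto intro: cyl_finite cyl_sets)

lemma closed_sets: assumes "closedin cantor_top K" shows "K \<in> sets coin"
proof -
  have "(\<Inter>m\<in>UNIV. hl m K) \<in> sets coin" by (rule sets.countable_INT) (auto intro: hl_sets)
  then show ?thesis using hl_inter[OF assms] by simp
qed

definition uu :: "((nat \<Rightarrow> bool) \<times> (nat \<Rightarrow> bool) set) \<Rightarrow> nat \<Rightarrow> real" where
  "uu p n = measure coin (snd p \<inter> cyl (fst p) n) / measure coin (cyl (fst p) n)"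

definition vv :: "((nat \<Rightarrow> bool) \<times> (nat \<Rightarrow> bool) set) \<Rightarrow> nat \<Rightarrow> nat \<Rightarrow> real" where
  "vv p n m = measure coin (hl m (snd p) \<inter> cyl (fst p) n) / measure coin (cyl (fst p) n)"

lemma uu_bounds: "0 \<le> uu p n \<and> uu p n \<le> 1"
proof -
  have "measure coin (snd p \<inter> cyl (fst p) n) \<le> measure coin (cyl (fst p) n)"
    by (rule C.finite_measure_mono) (auto intro: cyl_sets)
  then show ?thesis using cyl_pos[of "fst p" n] unfolding uu_def by (simp add: divide_le_eq_1)
qed

lemma vv_lim:
  assumes "closedin cantor_top (snd p)"
  shows "(\<lambda>m. vv p n m) \<longlonglongrightarrow> uu p n"
proof -
  let ?A = "\<lambda>m. hl m (snd p) \<inter> cyl (fst p) n"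
  have "(\<lambda>m. measure coin (?A m)) \<longlonglongrightarrow> measure coin (\<Inter>m. ?A m)"
  proof (rule Lim_measure_decseq)
    show "range ?A \<subseteq> sets coin" using hl_sets cyl_sets by auto
    show "decseq ?A" using hl_dec[of "snd p"] by (auto simp: decseq_def)
    show "\<And>i. emeasure coin (?A i) \<noteq> \<infinity>" by simp
  qed
  moreover have "(\<Inter>m. ?A m) = snd p \<inter> cyl (fst p) n" using hl_inter[OF assms] by blast
  ultimately have "(\<lambda>m. measure coin (?A m)) \<longlonglongrightarrow> measure coin (snd p \<inter> cyl (fst p) n)" by simp
  then show ?thesis unfolding vv_def uu_def
    by (intro tendsto_divide tendsto_const) (use cyl_pos[of "fst p" n] in auto)
qed

lemma vv_dec: "decseq (\<lambda>m. vv p n m)"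
proof (rule decseq_SucI)
  fix m
  have "measure coin (hl (Suc m) (snd p) \<inter> cyl (fst p) n) \<le> measure coin (hl m (snd p) \<inter> cyl (fst p) n)"
    by (rule C.finite_measure_mono) (use hl_Suc[of m "snd p"] hl_sets cyl_sets in auto)
  then show "vv p n (Suc m) \<le> vv p n m" unfolding vv_def
    using cyl_pos[of "fst p" n] by (simp add: divide_right_mono)
qed

lemma uu_ge_iff:
  assumes "closedin cantor_top (snd p)"
  shows "q \<le> uu p n \<longleftrightarrow> (\<forall>m. q \<le> vv p n m)"
proof
  assume "q \<le> uu p n"
  then show "\<forall>m. q \<le> vv p n m" using decseq_ge[OF vv_dec vv_lim[OF assms]] order_trans by blast
next
  assume "\<forall>m. q \<le> vv p n m"
  then show "q \<le> uu p n" using LIMSEQ_le_const[OF vv_lim[OF assms]] by blast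
qed

lemma uu_less_iff:
  assumes "closedin cantor_top (snd p)"
  shows "uu p n < q \<longleftrightarrow> (\<exists>m. vv p n m < q)"
  using uu_ge_iff[OF assms, of q n] by (auto simp: not_le[symmetric])

lemma vv_open_ge: "openin XX {p \<in> topspace XX. q \<le> vv p n m}"
  unfolding vv_def using XX_open_pred[of "\<lambda>c h. q \<le> measure coin (h \<inter> c) / measure coin c" n m] by simp

lemma vv_open_less: "openin XX {p \<in> topspace XX. vv p n m < q}"
  unfolding vv_def using XX_open_pred[of "\<lambda>c h. measure coin (h \<inter> c) / measure coin c < q" n m] by simp

lemma XX_closed: "p \<in> topspace XX \<Longrightarrow> closedin cantor_top (snd p)"
  using top_viet compactin_cantor by (auto)


lemma liminf_01:
  assumes "\<And>n. 0 \<le> u n \<and> u n \<le> (1::real)"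
  shows "0 \<le> liminf (\<lambda>n. ereal (u n))" "liminf (\<lambda>n. ereal (u n)) \<le> 1"
proof -
  show "0 \<le> liminf (\<lambda>n. ereal (u n))" by (rule Liminf_bounded) (use assms in auto)
  show "liminf (\<lambda>n. ereal (u n)) \<le> 1" by (rule Liminf_le) (use assms in auto)
qed

lemma liminf_gt_iff:
  assumes b: "\<And>n. 0 \<le> u n \<and> u n \<le> (1::real)"
  shows "ereal a < liminf (\<lambda>n. ereal (u n)) \<longleftrightarrow> (\<exists>q\<in>\<rat>. a < q \<and> (\<exists>m. \<forall>n\<ge>m. q \<le> u n))"
proof
  assume "ereal a < liminf (\<lambda>n. ereal (u n))"
  then obtain m where m: "ereal a < (INF n\<in>{m..}. ereal (u n))"
    unfolding liminf_SUP_INF by (auto simp: less_SUP_iff)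
  define I where "I = (INF n\<in>{m..}. ereal (u n))"
  have "I \<le> ereal (u m)" unfolding I_def by (rule INF_lower) simp
  then have "I \<le> 1" using b[of m] by (simp add: order_trans)
  then obtain r where r: "I = ereal r" using m unfolding I_def[symmetric]
    by (cases I) auto
  have "a < r" using m r unfolding I_def by simp
  then obtain q where q: "q \<in> \<rat>" "a < q" "q < r" using Rats_dense_in_real by blast
  have "\<forall>n\<ge>m. q \<le> u n"
  proof (intro allI impI)
    fix n assume "m \<le> n"
    then have "I \<le> ereal (u n)" unfolding I_def by (intro INF_lower) simp
    then show "q \<le> u n" using q r by simp
  qed
  then show "\<exists>q\<in>\<rat>. a < q \<and> (\<exists>m. \<forall>n\<ge>m. q \<le> u n)" using q by blast
next
  assume "\<exists>q\<in>\<rat>. a < q \<and> (\<exists>m. \<forall>n\<ge>m. q \<le> u n)"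
  then obtain q m where q: "a < q" "\<forall>n\<ge>m. q \<le> u n" by blast
  have "ereal q \<le> (INF n\<in>{m..}. ereal (u n))" using q by (intro INF_greatest) auto
  also have "\<dots> \<le> liminf (\<lambda>n. ereal (u n))" unfolding liminf_SUP_INF by (rule SUP_upper) simp
  finally have "ereal q \<le> liminf (\<lambda>n. ereal (u n))" .
  moreover have "ereal a < ereal q" using q by simp
  ultimately show "ereal a < liminf (\<lambda>n. ereal (u n))" by (rule less_le_trans[rotated])
qed

lemma liminf_lt_iff:
  assumes b: "\<And>n. 0 \<le> u n \<and> u n \<le> (1::real)"
  shows "liminf (\<lambda>n. ereal (u n)) < ereal c \<longleftrightarrow> (\<exists>q\<in>\<rat>. q < c \<and> (\<forall>m. \<exists>n\<ge>m. u n < q))"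
proof
  assume L: "liminf (\<lambda>n. ereal (u n)) < ereal c"
  obtain r where r: "liminf (\<lambda>n. ereal (u n)) = ereal r"
    using liminf_01[OF b] L by (cases "liminf (\<lambda>n. ereal (u n))") auto
  then have "r < c" using L by simp
  then obtain q where q: "q \<in> \<rat>" "r < q" "q < c" using Rats_dense_in_real by blast
  have "\<forall>m. \<exists>n\<ge>m. u n < q"
  proof
    fix m
    have "(INF n\<in>{m..}. ereal (u n)) \<le> liminf (\<lambda>n. ereal (u n))"
      unfolding liminf_SUP_INF by (rule SUP_upper) simp
    also have "\<dots> < ereal q" using r q by simp
    finally obtain n where "n \<in> {m..}" "ereal (u n) < ereal q" by (auto simp: INF_less_iff)
    then show "\<exists>n\<ge>m. u n < q" by auto
  qed
  then show "\<exists>q\<in>\<rat>. q < c \<and> (\<forall>m. \<exists>n\<ge>m. u n < q)" using q by blast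
next
  assume "\<exists>q\<in>\<rat>. q < c \<and> (\<forall>m. \<exists>n\<ge>m. u n < q)"
  then obtain q where q: "q < c" "\<forall>m. \<exists>n\<ge>m. u n < q" by blast
  have "liminf (\<lambda>n. ereal (u n)) \<le> ereal q" unfolding liminf_SUP_INF
  proof (rule SUP_least)
    fix m :: nat
    obtain n where n: "n \<ge> m" "u n < q" using q by blast
    have "(INF n\<in>{m..}. ereal (u n)) \<le> ereal (u n)" using n by (intro INF_lower) simp
    then show "(INF n\<in>{m..}. ereal (u n)) \<le> ereal q" using n by (simp add: order_trans)
  qed
  then show "liminf (\<lambda>n. ereal (u n)) < ereal c" using q by (simp add: le_less_trans)
qed

lemma liminf_real:
  assumes b: "\<And>n. 0 \<le> u n \<and> u n \<le> (1::real)"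
  shows "ereal (real_of_ereal (liminf (\<lambda>n. ereal (u n)))) = liminf (\<lambda>n. ereal (u n))"
  using liminf_01[of u, OF b] by (cases "liminf (\<lambda>n. ereal (u n))") auto


definition Gd :: "'a topology \<Rightarrow> 'a set \<Rightarrow> bool" where
  "Gd X S \<longleftrightarrow> (\<exists>\<O>. countable \<O> \<and> (\<forall>V\<in>\<O>. openin X V) \<and> S = topspace X \<inter> \<Inter>\<O>)"

definition Gds :: "'a topology \<Rightarrow> 'a set \<Rightarrow> bool" where
  "Gds X S \<longleftrightarrow> (\<exists>\<G>. countable \<G> \<and> (\<forall>G\<in>\<G>. Gd X G) \<and> S = \<Union>\<G>)"

lemma Gd_nat:
  assumes "Gd X G"
  shows "\<exists>V. (\<forall>i::nat. openin X (V i)) \<and> G = topspace X \<inter> \<Inter>(range V)"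
proof -
  obtain \<O> where V: "countable \<O>" "\<forall>V\<in>\<O>. openin X V" "G = topspace X \<inter> \<Inter>\<O>"
    using assms unfolding Gd_def by blast
  show ?thesis
  proof (cases "\<O> = {}")
    case True
    then show ?thesis using V by (intro exI[of _ "\<lambda>_. topspace X"]) auto
  next
    case False
    then have "range (from_nat_into \<O>) = \<O>" using V(1) by (simp add: range_from_nat_into)
    then show ?thesis using V by (intro exI[of _ "from_nat_into \<O>"]) auto
  qed
qed

lemma Gd_sub: "Gd X G \<Longrightarrow> G \<subseteq> topspace X"
  unfolding Gd_def by auto

lemma Gd_compl:
  assumes "Gd X G" shows "topspace X - G \<in> sigma0 X (Suc (Suc 0))"
proof -
  obtain V where V: "\<forall>i::nat. openin X (V i)" "G = topspace X \<inter> \<Inter>(range V)"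
    using Gd_nat[OF assms] by blast
  have "topspace X - G = \<Union>(range (\<lambda>i. topspace X - V i))" using V by auto
  moreover have "\<forall>i. topspace X - V i \<subseteq> topspace X \<and> topspace X - (topspace X - V i) \<in> sigma0 X (Suc 0)"
    using V(1) openin_subset by (auto simp: Diff_Diff_Int inf.absorb2)
  ultimately show ?thesis
    by (simp only: sigma0.simps mem_Collect_eq) (intro exI[of _ "\<lambda>i. topspace X - V i"] conjI; simp)
qed

lemma Gd_empty: "Gd X {}"
  unfolding Gd_def by (intro exI[of _ "{{}}"]) auto

lemma Gds_nat:
  assumes "Gds X S"
  shows "\<exists>G. (\<forall>i::nat. Gd X (G i)) \<and> S = \<Union>(range G)"
proof -
  obtain \<G> where G: "countable \<G>" "\<forall>G\<in>\<G>. Gd X G" "S = \<Union>\<G>"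
    using assms unfolding Gds_def by blast
  show ?thesis
  proof (cases "\<G> = {}")
    case True
    then show ?thesis using G Gd_empty by (intro exI[of _ "\<lambda>_. {}"]) auto
  next
    case False
    then have "range (from_nat_into \<G>) = \<G>" using G(1) by (simp add: range_from_nat_into)
    then show ?thesis using G by (intro exI[of _ "from_nat_into \<G>"]) auto
  qed
qed

lemma Gds_sigma3:
  assumes "Gds X S" shows "S \<in> sigma0 X (Suc 2)"
proof -
  obtain G where G: "\<forall>i::nat. Gd X (G i)" "S = \<Union>(range G)" using Gds_nat[OF assms] by blast
  have "\<forall>i. G i \<subseteq> topspace X \<and> topspace X - G i \<in> sigma0 X (Suc (Suc 0))"
    using G(1) Gd_sub Gd_compl by blast
  then show ?thesis using G(2) by (simp add: numeral_2_eq_2) blast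
qed

lemma Gd_open: "openin X V \<Longrightarrow> Gd X V"
  unfolding Gd_def using openin_subset by (intro exI[of _ "{V}"]) auto

lemma Gd_INT:
  assumes I: "countable I" and G: "\<And>i. i \<in> I \<Longrightarrow> Gd X (G i)"
  shows "Gd X (topspace X \<inter> (\<Inter>i\<in>I. G i))"
proof -
  have "\<forall>i\<in>I. \<exists>\<O>. countable \<O> \<and> (\<forall>V\<in>\<O>. openin X V) \<and> G i = topspace X \<inter> \<Inter>\<O>"
    using G unfolding Gd_def by blast
  then obtain F where F: "\<And>i. i \<in> I \<Longrightarrow> countable (F i) \<and> (\<forall>V\<in>F i. openin X V) \<and> G i = topspace X \<inter> \<Inter>(F i)"
    by metis
  show ?thesis unfolding Gd_def
  proof (intro exI[of _ "\<Union>i\<in>I. F i"] conjI)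
    show "countable (\<Union>i\<in>I. F i)" using I F by (intro countable_UN) auto
    show "\<forall>V\<in>\<Union>i\<in>I. F i. openin X V" using F by auto
    show "topspace X \<inter> (\<Inter>i\<in>I. G i) = topspace X \<inter> \<Inter>(\<Union>i\<in>I. F i)" using F by auto
  qed
qed

lemma Gd_Int:
  assumes "Gd X A" "Gd X B" shows "Gd X (A \<inter> B)"
proof -
  obtain \<A> where A: "countable \<A>" "\<forall>V\<in>\<A>. openin X V" "A = topspace X \<inter> \<Inter>\<A>"
    using assms(1) unfolding Gd_def by blast
  obtain \<B> where B: "countable \<B>" "\<forall>V\<in>\<B>. openin X V" "B = topspace X \<inter> \<Inter>\<B>"
    using assms(2) unfolding Gd_def by blast
  show ?thesis unfolding Gd_def
    by (intro exI[of _ "\<A> \<union> \<B>"]) (use A B in auto)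
qed

lemma Gd_Gds: "Gd X G \<Longrightarrow> Gds X G"
  unfolding Gds_def by (intro exI[of _ "{G}"]) auto

lemma Gds_UN:
  assumes I: "countable I" and S: "\<And>i. i \<in> I \<Longrightarrow> Gds X (S i)"
  shows "Gds X (\<Union>i\<in>I. S i)"
proof -
  have "\<forall>i\<in>I. \<exists>\<G>. countable \<G> \<and> (\<forall>G\<in>\<G>. Gd X G) \<and> S i = \<Union>\<G>"
    using S unfolding Gds_def by blast
  then obtain F where F: "\<And>i. i \<in> I \<Longrightarrow> countable (F i) \<and> (\<forall>G\<in>F i. Gd X G) \<and> S i = \<Union>(F i)"
    by metis
  show ?thesis unfolding Gds_def
  proof (intro exI[of _ "\<Union>i\<in>I. F i"] conjI)
    show "countable (\<Union>i\<in>I. F i)" using I F by (intro countable_UN) auto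
    show "\<forall>G\<in>\<Union>i\<in>I. F i. Gd X G" using F by auto
    show "(\<Union>i\<in>I. S i) = \<Union>(\<Union>i\<in>I. F i)" using F by auto
  qed
qed

lemma Gds_Int:
  assumes "Gds X A" "Gds X B" shows "Gds X (A \<inter> B)"
proof -
  obtain \<A> where A: "countable \<A>" "\<forall>G\<in>\<A>. Gd X G" "A = \<Union>\<A>"
    using assms(1) unfolding Gds_def by blast
  obtain \<B> where B: "countable \<B>" "\<forall>G\<in>\<B>. Gd X G" "B = \<Union>\<B>"
    using assms(2) unfolding Gds_def by blast
  show ?thesis unfolding Gds_def
  proof (intro exI[of _ "(\<lambda>(G,H). G \<inter> H) ` (\<A> \<times> \<B>)"] conjI)
    show "countable ((\<lambda>(G,H). G \<inter> H) ` (\<A> \<times> \<B>))" using A B by auto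
    show "\<forall>G\<in>(\<lambda>(G,H). G \<inter> H) ` (\<A> \<times> \<B>). Gd X G"
    proof clarify
      fix G H assume "G \<in> \<A>" "H \<in> \<B>"
      then show "Gd X (G \<inter> H)" using A B Gd_Int by blast
    qed
    show "A \<inter> B = \<Union>((\<lambda>(G,H). G \<inter> H) ` (\<A> \<times> \<B>))" using A B by auto
  qed
qed


definition FF :: "((nat \<Rightarrow> bool) \<times> (nat \<Rightarrow> bool) set) \<Rightarrow> real" where
  "FF p = real_of_ereal (liminf (\<lambda>n. ereal (uu p n)))"

lemma ld_eq: "lower_density (snd p) (fst p) = FF p"
  unfolding lower_density_def uu_def FF_def by (rule refl)

lemma FF_eq: "ereal (FF p) = liminf (\<lambda>n. ereal (uu p n))"
  unfolding FF_def by (rule liminf_real) (rule uu_bounds)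

lemma FF_01: "0 \<le> FF p \<and> FF p \<le> 1"
proof -
  have "0 \<le> ereal (FF p)" "ereal (FF p) \<le> 1"
    using liminf_01[of "uu p", OF uu_bounds] by (simp_all only: FF_eq)
  then show ?thesis by simp
qed

lemma FF_gt_iff:
  assumes "p \<in> topspace XX"
  shows "a < FF p \<longleftrightarrow> (\<exists>q\<in>\<rat>. a < q \<and> (\<exists>m. \<forall>n\<ge>m. \<forall>m'. q \<le> vv p n m'))"
proof -
  have "a < FF p \<longleftrightarrow> ereal a < ereal (FF p)" by simp
  also have "\<dots> \<longleftrightarrow> ereal a < liminf (\<lambda>n. ereal (uu p n))" by (simp only: FF_eq)
  also have "\<dots> \<longleftrightarrow> (\<exists>q\<in>\<rat>. a < q \<and> (\<exists>m. \<forall>n\<ge>m. q \<le> uu p n))"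
    by (rule liminf_gt_iff) (rule uu_bounds)
  also have "\<dots> \<longleftrightarrow> (\<exists>q\<in>\<rat>. a < q \<and> (\<exists>m. \<forall>n\<ge>m. \<forall>m'. q \<le> vv p n m'))"
    by (simp only: uu_ge_iff[OF XX_closed[OF assms]])
  finally show ?thesis .
qed

lemma FF_lt_iff:
  assumes "p \<in> topspace XX"
  shows "FF p < c \<longleftrightarrow> (\<exists>q\<in>\<rat>. q < c \<and> (\<forall>m. \<exists>n\<ge>m. \<exists>m'. vv p n m' < q))"
proof -
  have "FF p < c \<longleftrightarrow> ereal (FF p) < ereal c" by simp
  also have "\<dots> \<longleftrightarrow> liminf (\<lambda>n. ereal (uu p n)) < ereal c" by (simp only: FF_eq)
  also have "\<dots> \<longleftrightarrow> (\<exists>q\<in>\<rat>. q < c \<and> (\<forall>m. \<exists>n\<ge>m. uu p n < q))"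
    by (rule liminf_lt_iff) (rule uu_bounds)
  also have "\<dots> \<longleftrightarrow> (\<exists>q\<in>\<rat>. q < c \<and> (\<forall>m. \<exists>n\<ge>m. \<exists>m'. vv p n m' < q))"
    by (simp only: uu_less_iff[OF XX_closed[OF assms]])
  finally show ?thesis .
qed

lemma countable_Rats_sub: "countable (\<rat> \<inter> A)"
  using countable_rat countable_subset by blast

lemma gt_set: "Gds XX {p \<in> topspace XX. a < FF p}"
proof -
  define G where "G q m = topspace XX \<inter> (\<Inter>nm\<in>{m..} \<times> (UNIV::nat set). {p \<in> topspace XX. q \<le> vv p (fst nm) (snd nm)})"
    for q :: real and m :: nat
  have eq: "{p \<in> topspace XX. a < FF p} = (\<Union>q\<in>\<rat> \<inter> {a<..}. \<Union>m. G q m)"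
  proof (intro set_eqI iffI)
    fix p assume p: "p \<in> {p \<in> topspace XX. a < FF p}"
    then have top: "p \<in> topspace XX" by blast
    obtain q m where q: "q \<in> \<rat>" "a < q" "\<forall>n\<ge>m. \<forall>m'. q \<le> vv p n m'"
      using FF_gt_iff[OF top, of a] p by blast
    have "p \<in> G q m" unfolding G_def
    proof (intro IntI INT_I)
      show "p \<in> topspace XX" by (rule top)
      fix nm :: "nat \<times> nat" assume "nm \<in> {m..} \<times> UNIV"
      then show "p \<in> {p \<in> topspace XX. q \<le> vv p (fst nm) (snd nm)}" using q(3) top by auto
    qed
    then show "p \<in> (\<Union>q\<in>\<rat> \<inter> {a<..}. \<Union>m. G q m)" using q(1,2) by blast
  next
    fix p assume "p \<in> (\<Union>q\<in>\<rat> \<inter> {a<..}. \<Union>m. G q m)"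
    then obtain q m where q: "q \<in> \<rat>" "a < q" "p \<in> G q m" by blast
    then have top: "p \<in> topspace XX" unfolding G_def by blast
    have "\<forall>n\<ge>m. \<forall>m'. q \<le> vv p n m'"
    proof (intro allI impI)
      fix n m' :: nat assume "m \<le> n"
      then have "(n, m') \<in> {m..} \<times> UNIV" by simp
      then show "q \<le> vv p n m'" using q(3) unfolding G_def by fastforce
    qed
    then have "a < FF p" using FF_gt_iff[OF top, of a] q(1,2) by blast
    then show "p \<in> {p \<in> topspace XX. a < FF p}" using top by blast
  qed
  have "Gd XX (G q m)" for q m unfolding G_def
  proof (rule Gd_INT)
    show "countable ({m..} \<times> (UNIV::nat set))" by (rule countableI_type)
    fix nm :: "nat \<times> nat"
    show "Gd XX {p \<in> topspace XX. q \<le> vv p (fst nm) (snd nm)}" by (rule Gd_open[OF vv_open_ge])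
  qed
  then show ?thesis unfolding eq
    by (intro Gds_UN countable_Rats_sub countableI_type Gd_Gds)
qed

lemma lt_set: "Gds XX {p \<in> topspace XX. FF p < c}"
proof -
  define O' where "O' q m = (\<Union>nm\<in>{m..} \<times> (UNIV::nat set). {p \<in> topspace XX. vv p (fst nm) (snd nm) < q})"
    for q :: real and m :: nat
  define G where "G q = topspace XX \<inter> (\<Inter>m. O' q m)" for q
  have eq: "{p \<in> topspace XX. FF p < c} = (\<Union>q\<in>\<rat> \<inter> {..<c}. G q)"
  proof (intro set_eqI iffI)
    fix p assume p: "p \<in> {p \<in> topspace XX. FF p < c}"
    then have top: "p \<in> topspace XX" by blast
    obtain q where q: "q \<in> \<rat>" "q < c" "\<forall>m. \<exists>n\<ge>m. \<exists>m'. vv p n m' < q"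
      using FF_lt_iff[OF top, of c] p by blast
    have "p \<in> G q" unfolding G_def
    proof (intro IntI INT_I)
      show "p \<in> topspace XX" by (rule top)
      fix m :: nat
      obtain n m' where "n \<ge> m" "vv p n m' < q" using q(3) by blast
      then show "p \<in> O' q m" unfolding O'_def using top by force
    qed
    then show "p \<in> (\<Union>q\<in>\<rat> \<inter> {..<c}. G q)" using q(1,2) by blast
  next
    fix p assume "p \<in> (\<Union>q\<in>\<rat> \<inter> {..<c}. G q)"
    then obtain q where q: "q \<in> \<rat>" "q < c" "p \<in> G q" by blast
    then have top: "p \<in> topspace XX" unfolding G_def by blast
    have "\<forall>m. \<exists>n\<ge>m. \<exists>m'. vv p n m' < q"
    proof
      fix m
      have "p \<in> O' q m" using q(3) unfolding G_def by blast
      then obtain nm where "nm \<in> {m..} \<times> (UNIV::nat set)" "vv p (fst nm) (snd nm) < q"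
        unfolding O'_def by blast
      then have "m \<le> fst nm" "vv p (fst nm) (snd nm) < q" by (auto simp: mem_Times_iff)
      then show "\<exists>n\<ge>m. \<exists>m'. vv p n m' < q" by blast
    qed
    then have "FF p < c" using FF_lt_iff[OF top, of c] q(1,2) by blast
    then show "p \<in> {p \<in> topspace XX. FF p < c}" using top by blast
  qed
  have op: "openin XX (O' q m)" for m q unfolding O'_def
  proof (rule openin_Union)
    fix T assume "T \<in> (\<lambda>nm. {p \<in> topspace XX. vv p (fst nm) (snd nm) < q}) ` ({m..} \<times> UNIV)"
    then obtain nm where "T = {p \<in> topspace XX. vv p (fst nm) (snd nm) < q}" by blast
    then show "openin XX T" using vv_open_less[of "fst nm" "snd nm" q] by blast
  qed
  have "Gd XX (G q)" for q unfolding G_def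
  proof (rule Gd_INT)
    show "countable (UNIV::nat set)" by (rule countableI_type)
    fix m show "Gd XX (O' q m)" by (rule Gd_open[OF op])
  qed
  then show ?thesis unfolding eq
    by (intro Gds_UN countable_Rats_sub Gd_Gds)
qed

lemma upper:
  assumes "open U" shows "{p \<in> topspace XX. FF p \<in> U} \<in> sigma0 XX (Suc 2)"
proof -
  define R where "R = {ab \<in> \<rat> \<times> \<rat>. {fst ab<..<snd ab} \<subseteq> U}"
  have cR: "countable R"
    by (rule countable_subset[of _ "\<rat> \<times> \<rat>"]) (auto simp: R_def countable_rat)
  have eq: "{p \<in> topspace XX. FF p \<in> U} =
     (\<Union>ab\<in>R. {p \<in> topspace XX. fst ab < FF p} \<inter> {p \<in> topspace XX. FF p < snd ab})"
    (is "?L = ?R")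
  proof (intro set_eqI iffI)
    fix p assume p: "p \<in> ?L"
    then have "FF p \<in> U" by blast
    then obtain e where e: "e > 0" "ball (FF p) e \<subseteq> U" using assms open_contains_ball by blast
    obtain a where a: "a \<in> \<rat>" "FF p - e < a" "a < FF p" using Rats_dense_in_real[of "FF p - e" "FF p"] e by auto
    obtain b where b: "b \<in> \<rat>" "FF p < b" "b < FF p + e" using Rats_dense_in_real[of "FF p" "FF p + e"] e by auto
    have "{a<..<b} \<subseteq> ball (FF p) e"
    proof
      fix y assume "y \<in> {a<..<b}"
      then have "a < y" "y < b" by auto
      then show "y \<in> ball (FF p) e" using a b by (simp add: ball_def dist_real_def abs_less_iff)
    qed
    then have "(a, b) \<in> R" using a(1) b(1) e(2) unfolding R_def by auto
    moreover have "p \<in> {p \<in> topspace XX. a < FF p} \<inter> {p \<in> topspace XX. FF p < b}" using p a b by blast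
    ultimately show "p \<in> ?R" by force
  next
    fix p assume "p \<in> ?R"
    then obtain a b where "(a,b) \<in> R" "p \<in> topspace XX" "a < FF p" "FF p < b" by force
    then show "p \<in> ?L" unfolding R_def by auto
  qed
  show ?thesis unfolding eq
    by (intro Gds_sigma3 Gds_UN cR Gds_Int gt_set lt_set)
qed


lemma sigma0_preimage:
  assumes g: "continuous_map Y X g"
  shows "S \<in> sigma0 X (Suc n) \<Longrightarrow> {x \<in> topspace Y. g x \<in> S} \<in> sigma0 Y (Suc n)"
proof (induction n arbitrary: S)
  case 0
  then have "openin X S" by simp
  then have "openin Y {x \<in> topspace Y. g x \<in> S}" by (rule openin_continuous_map_preimage[OF g])
  then show ?case by simp
next
  case (Suc n)
  have "S \<in> {\<Union>(range A) | A :: nat \<Rightarrow> _. \<forall>i. A i \<subseteq> topspace X \<and> topspace X - A i \<in> sigma0 X (Suc n)}"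
    using Suc.prems by (simp only: sigma0.simps(3))
  then obtain A :: "nat \<Rightarrow> _" where A: "S = \<Union>(range A)" "\<forall>i. A i \<subseteq> topspace X \<and> topspace X - A i \<in> sigma0 X (Suc n)"
    by blast
  define A' where "A' (i::nat) = {x \<in> topspace Y. g x \<in> A i}" for i
  have gY: "g x \<in> topspace X" if "x \<in> topspace Y" for x
    using g that by (rule continuous_map_image_subset_topspace[THEN subsetD, OF _ imageI])
  have eq: "topspace Y - A' i = {x \<in> topspace Y. g x \<in> topspace X - A i}" for i
    using gY unfolding A'_def by blast
  have c2: "\<forall>i. A' i \<subseteq> topspace Y \<and> topspace Y - A' i \<in> sigma0 Y (Suc n)"
  proof
    fix i
    have "A' i \<subseteq> topspace Y" unfolding A'_def by blast
    moreover have "topspace X - A i \<in> sigma0 X (Suc n)" using A(2) by blast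
    then have "{x \<in> topspace Y. g x \<in> topspace X - A i} \<in> sigma0 Y (Suc n)" by (rule Suc.IH)
    then have "topspace Y - A' i \<in> sigma0 Y (Suc n)" by (simp only: eq)
    ultimately show "A' i \<subseteq> topspace Y \<and> topspace Y - A' i \<in> sigma0 Y (Suc n)" by blast
  qed
  have c1: "{x \<in> topspace Y. g x \<in> S} = \<Union>(range A')" using A(1) unfolding A'_def by blast
  have "{x \<in> topspace Y. g x \<in> S} \<in> {\<Union>(range B) | B :: nat \<Rightarrow> _. \<forall>i. B i \<subseteq> topspace Y \<and> topspace Y - B i \<in> sigma0 Y (Suc n)}"
    using c1 c2 by blast
  then show ?case by (simp only: sigma0.simps(3))
qed

primrec st :: "(nat \<Rightarrow> (nat \<Rightarrow> bool) \<Rightarrow> nat) \<Rightarrow> nat \<Rightarrow> (nat \<Rightarrow> bool) \<times> nat" where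
  "st M 0 = ((\<lambda>_. False), 0)"
| "st M (Suc i) = ((fst (st M i))(max (M i (fst (st M i))) (snd (st M i)) := True),
                   Suc (max (M i (fst (st M i))) (snd (st M i))))"

lemma st_finite: "finite {k. fst (st M i) k}"
proof (induction i)
  case 0 then show ?case by simp
next
  case (Suc i)
  let ?p = "max (M i (fst (st M i))) (snd (st M i))"
  have sub: "{k. fst (st M (Suc i)) k} \<subseteq> insert ?p {k. fst (st M i) k}" by auto
  have "finite (insert ?p {k. fst (st M i) k})" using Suc by simp
  then show ?case by (rule finite_subset[OF sub])
qed

lemma st_len: "i \<le> snd (st M i)"
  by (induction i) auto

lemma st_len_mono: "i \<le> j \<Longrightarrow> snd (st M i) \<le> snd (st M j)"
proof (induction j rule: dec_induct)
  case base then show ?case by simp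
next
  case (step j) then show ?case by simp
qed

lemma st_agree: "i \<le> j \<Longrightarrow> k < snd (st M i) \<Longrightarrow> fst (st M j) k = fst (st M i) k"
proof (induction j rule: dec_induct)
  case base then show ?case by simp
next
  case (step j)
  have "k < snd (st M j)" using step st_len_mono by (meson less_le_trans)
  then have "k \<noteq> max (M j (fst (st M j))) (snd (st M j))" by (simp add: max_def)
  then have "fst (st M (Suc j)) k = fst (st M j) k" by simp
  then show ?case using step by simp
qed

definition lim_st :: "(nat \<Rightarrow> (nat \<Rightarrow> bool) \<Rightarrow> nat) \<Rightarrow> nat \<Rightarrow> bool" where
  "lim_st M k = fst (st M (Suc k)) k"

lemma lim_st_agree: "k < snd (st M i) \<Longrightarrow> lim_st M k = fst (st M i) k"
proof -
  assume k: "k < snd (st M i)"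
  let ?J = "max i (Suc k)"
  have "fst (st M ?J) k = fst (st M i) k" using st_agree[of i ?J k M] k by simp
  moreover have "k < snd (st M (Suc k))" using st_len[of "Suc k" M] by simp
  then have "fst (st M ?J) k = fst (st M (Suc k)) k" using st_agree[of "Suc k" ?J k M] by simp
  ultimately show ?thesis unfolding lim_st_def by simp
qed

lemma lim_st_M: "j < M i (fst (st M i)) \<Longrightarrow> lim_st M j = fst (st M i) j"
proof -
  assume j: "j < M i (fst (st M i))"
  have "j < snd (st M (Suc i))" using j by simp
  then have "lim_st M j = fst (st M (Suc i)) j" by (rule lim_st_agree)
  also have "\<dots> = fst (st M i) j"
  proof -
    have "j \<noteq> max (M i (fst (st M i))) (snd (st M i))" using j by (simp add: max_def)
    then show ?thesis by simp
  qed
  finally show ?thesis .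
qed

lemma lim_st_inf: "infinite {k. lim_st M k}"
  unfolding infinite_nat_iff_unbounded_le
proof
  fix i
  let ?p = "max (M i (fst (st M i))) (snd (st M i))"
  have "?p < snd (st M (Suc i))" by simp
  then have "lim_st M ?p = fst (st M (Suc i)) ?p" by (rule lim_st_agree)
  then have "lim_st M ?p" by simp
  moreover have "i \<le> ?p" using st_len[of i M] by simp
  ultimately show "\<exists>n\<ge>i. n \<in> {k. lim_st M k}" by blast
qed

lemma Q_not: "{x::nat \<Rightarrow> bool. infinite {k. x k}} \<notin> sigma0 cantor_top (Suc (Suc 0))"
proof
  let ?Q = "{x::nat \<Rightarrow> bool. infinite {k. x k}}"
  assume "?Q \<in> sigma0 cantor_top (Suc (Suc 0))"
  then have "\<exists>A :: nat \<Rightarrow> _. ?Q = \<Union>(range A) \<and> (\<forall>i. A i \<subseteq> topspace cantor_top \<and> topspace cantor_top - A i \<in> sigma0 cantor_top (Suc 0))"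
    by (simp only: sigma0.simps(3) mem_Collect_eq)
  then obtain A :: "nat \<Rightarrow> _" where A: "?Q = \<Union>(range A)" "\<forall>i. openin cantor_top (UNIV - A i)"
    by auto
  have ex: "\<forall>i w. \<exists>m. finite {k. w k} \<longrightarrow> (\<forall>y. (\<forall>j<m. y j = w j) \<longrightarrow> y \<notin> A i)"
  proof (intro allI)
    fix i and w :: "nat \<Rightarrow> bool"
    show "\<exists>m. finite {k. w k} \<longrightarrow> (\<forall>y. (\<forall>j<m. y j = w j) \<longrightarrow> y \<notin> A i)"
    proof (cases "finite {k. w k}")
      case True
      then have "w \<notin> ?Q" by simp
      then have "w \<notin> A i" using A(1) by blast
      then have "w \<in> UNIV - A i" by simp
      then obtain m where m: "cyl w m \<subseteq> UNIV - A i" using open_cyl_sub A(2) by blast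
      show ?thesis
      proof (intro exI[of _ m] impI allI)
        fix y assume "\<forall>j<m. y j = w j"
        then have "y \<in> cyl w m" by (simp add: cyl_def)
        then show "y \<notin> A i" using m by blast
      qed
    qed simp
  qed
  define M where "M i w = (SOME m. finite {k. w k} \<longrightarrow> (\<forall>y. (\<forall>j<m. y j = w j) \<longrightarrow> y \<notin> A i))" for i w
  have M: "\<forall>y. (\<forall>j<M i w. y j = w j) \<longrightarrow> y \<notin> A i" if fin: "finite {k. w k}" for i w
  proof -
    have "finite {k. w k} \<longrightarrow> (\<forall>y. (\<forall>j<M i w. y j = w j) \<longrightarrow> y \<notin> A i)"
      unfolding M_def by (rule someI_ex) (rule ex[rule_format])
    then show ?thesis using fin by blast
  qed
  define x where "x = lim_st M"
  have "x \<in> ?Q" unfolding x_def using lim_st_inf by simp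
  then obtain i where "x \<in> A i" using A(1) by auto
  moreover have "x \<notin> A i"
  proof -
    have "\<forall>y. (\<forall>j<M i (fst (st M i)). y j = fst (st M i) j) \<longrightarrow> y \<notin> A i"
      by (rule M[OF st_finite])
    moreover have "\<forall>j<M i (fst (st M i)). lim_st M j = fst (st M i) j" using lim_st_M by blast
    ultimately show ?thesis unfolding x_def by blast
  qed
  ultimately show False by blast
qed

definition Kx :: "(nat \<Rightarrow> bool) \<Rightarrow> (nat \<Rightarrow> bool) set" where
  "Kx x = {y. \<forall>k. y k \<and> (\<forall>i<k. \<not> y i) \<longrightarrow> \<not> x k}"

lemma first_unique:
  fixes y :: "nat \<Rightarrow> bool"
  assumes "y k" "\<forall>i<k. \<not> y i" "y k2" "\<forall>i<k2. \<not> y i" shows "k = k2"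
proof (rule ccontr)
  assume "k \<noteq> k2"
  then have "k < k2 \<or> k2 < k" by arith
  then show False
  proof
    assume "k < k2" then have "\<not> y k" using assms(4) by simp
    then show False using assms(1) by contradiction
  next
    assume "k2 < k" then have "\<not> y k2" using assms(2) by simp
    then show False using assms(3) by contradiction
  qed
qed

lemma first_ex:
  fixes y :: "nat \<Rightarrow> bool"
  assumes "y i" shows "\<exists>k\<le>i. y k \<and> (\<forall>j<k. \<not> y j)"
proof -
  let ?k = "LEAST k. y k"
  have "y ?k" using assms by (rule LeastI)
  moreover have "?k \<le> i" using assms by (rule Least_le)
  moreover have "\<forall>j<?k. \<not> y j"
  proof (intro allI impI)
    fix j assume "j < ?k" then show "\<not> y j" by (rule not_less_Least)
  qed
  ultimately show ?thesis by blast
qed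

lemma Kx_first:
  assumes a: "y k" and b: "\<forall>i<k. \<not> y i"
  shows "y \<in> Kx x \<longleftrightarrow> \<not> x k"
proof
  assume "y \<in> Kx x"
  then have "\<forall>k. y k \<and> (\<forall>i<k. \<not> y i) \<longrightarrow> \<not> x k" unfolding Kx_def by (rule CollectD)
  then show "\<not> x k" using a b by blast
next
  assume nx: "\<not> x k"
  have "\<forall>k'. y k' \<and> (\<forall>i<k'. \<not> y i) \<longrightarrow> \<not> x k'"
  proof (intro allI impI)
    fix k' assume h: "y k' \<and> (\<forall>i<k'. \<not> y i)"
    then have "k = k'" using first_unique[OF a b] by blast
    then show "\<not> x k'" using nx by simp
  qed
  then show "y \<in> Kx x" unfolding Kx_def by blast
qed

lemma Kx_none: "(\<forall>i. \<not> y i) \<Longrightarrow> y \<in> Kx x"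
  unfolding Kx_def by blast

lemma Kx_notin: "y \<notin> Kx x \<Longrightarrow> \<exists>k. y k \<and> (\<forall>i<k. \<not> y i) \<and> x k"
  unfolding Kx_def by blast

lemma cyl_Suc_first:
  assumes "y' \<in> cyl y (Suc k)" "y k" "\<forall>i<k. \<not> y i"
  shows "y' k" "\<forall>i<k. \<not> y' i"
proof -
  have h: "\<forall>i<Suc k. y' i = y i" using assms(1) unfolding cyl_def by (rule CollectD)
  show "y' k" using h assms(2) by simp
  show "\<forall>i<k. \<not> y' i" using h assms(3) by simp
qed

lemma Kx_closed: "closedin cantor_top (Kx x)"
  unfolding closedin_def
proof (intro conjI)
  show "Kx x \<subseteq> topspace cantor_top" by simp
  show "openin cantor_top (topspace cantor_top - Kx x)"
  proof (subst openin_subopen, intro ballI)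
    fix y assume "y \<in> topspace cantor_top - Kx x"
    then have "y \<notin> Kx x" by blast
    then obtain k where k: "y k" "\<forall>i<k. \<not> y i" "x k" using Kx_notin by blast
    have "cyl y (Suc k) \<subseteq> topspace cantor_top - Kx x"
    proof
      fix y' assume y': "y' \<in> cyl y (Suc k)"
      have "y' \<notin> Kx x" using Kx_first[OF cyl_Suc_first[OF y' k(1,2)]] k(3) by simp
      then show "y' \<in> topspace cantor_top - Kx x" by simp
    qed
    moreover have "y \<in> cyl y (Suc k)" by (simp add: cyl_def)
    ultimately show "\<exists>T. openin cantor_top T \<and> y \<in> T \<and> T \<subseteq> topspace cantor_top - Kx x"
      using cyl_open by blast
  qed
qed

lemma Kx_open1:
  assumes U: "openin cantor_top U" shows "openin cantor_top {x. Kx x \<subseteq> U}"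
proof (subst openin_subopen, intro ballI)
  fix x assume x: "x \<in> {x. Kx x \<subseteq> U}"
  have "(\<lambda>_. False) \<in> Kx x" by (rule Kx_none) simp
  then have "(\<lambda>_. False) \<in> U" using x by blast
  then obtain m where m: "cyl (\<lambda>_. False) m \<subseteq> U" using open_cyl_sub U by blast
  have "cyl x m \<subseteq> {x. Kx x \<subseteq> U}"
  proof
    fix x' assume x': "x' \<in> cyl x m"
    have "Kx x' \<subseteq> U"
    proof
      fix y assume y: "y \<in> Kx x'"
      show "y \<in> U"
      proof (cases "\<exists>i<m. y i")
        case False
        then have "y \<in> cyl (\<lambda>_. False) m" unfolding cyl_def by simp
        then show ?thesis using m by blast
      next
        case True
        then obtain i where i: "i < m" "y i" by blast
        then obtain k where k: "k \<le> i" "y k" "\<forall>j<k. \<not> y j" using first_ex[of y i] by blast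
        then have "k < m" using i(1) by simp
        then have "x' k = x k" using x' unfolding cyl_def by simp
        moreover have "\<not> x' k" using Kx_first[OF k(2,3)] y by simp
        ultimately have "\<not> x k" by simp
        then have "y \<in> Kx x" using Kx_first[OF k(2,3)] by simp
        then show ?thesis using x by blast
      qed
    qed
    then show "x' \<in> {x. Kx x \<subseteq> U}" by simp
  qed
  moreover have "x \<in> cyl x m" by (simp add: cyl_def)
  ultimately show "\<exists>T. openin cantor_top T \<and> x \<in> T \<and> T \<subseteq> {x. Kx x \<subseteq> U}"
    using cyl_open by blast
qed

lemma Kx_open2:
  assumes U: "openin cantor_top U" shows "openin cantor_top {x. Kx x \<inter> U \<noteq> {}}"
proof (subst openin_subopen, intro ballI)
  fix x assume x: "x \<in> {x. Kx x \<inter> U \<noteq> {}}"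
  then obtain y where y: "y \<in> Kx x" "y \<in> U" by blast
  show "\<exists>T. openin cantor_top T \<and> x \<in> T \<and> T \<subseteq> {x. Kx x \<inter> U \<noteq> {}}"
  proof (cases "\<exists>i. y i")
    case False
    have "UNIV \<subseteq> {x. Kx x \<inter> U \<noteq> {}}"
    proof
      fix x' :: "nat \<Rightarrow> bool"
      have "y \<in> Kx x'" using False by (intro Kx_none) blast
      then show "x' \<in> {x. Kx x \<inter> U \<noteq> {}}" using y(2) by blast
    qed
    moreover have "openin cantor_top UNIV" using openin_topspace[of cantor_top] by simp
    ultimately show ?thesis by blast
  next
    case True
    then obtain i where "y i" by blast
    then obtain k where k0: "k \<le> i" "y k" "\<forall>j<k. \<not> y j" using first_ex[of y i] by blast
    have nx: "\<not> x k" using Kx_first[OF k0(2,3)] y(1) by simp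
    have "cyl x (Suc k) \<subseteq> {x. Kx x \<inter> U \<noteq> {}}"
    proof
      fix x' assume "x' \<in> cyl x (Suc k)"
      then have "x' k = x k" unfolding cyl_def by simp
      then have "y \<in> Kx x'" using Kx_first[OF k0(2,3)] nx by simp
      then show "x' \<in> {x. Kx x \<inter> U \<noteq> {}}" using y(2) by blast
    qed
    moreover have "x \<in> cyl x (Suc k)" by (simp add: cyl_def)
    ultimately show ?thesis using cyl_open by blast
  qed
qed

lemma continuous_map_generated:
  assumes top: "\<And>x. x \<in> topspace Y \<Longrightarrow> g x \<in> \<Union>S"
    and op: "\<And>s. s \<in> S \<Longrightarrow> openin Y {x \<in> topspace Y. g x \<in> s}"
  shows "continuous_map Y (topology_generated_by S) g"
  unfolding continuous_map_def
proof (intro conjI allI impI)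
  show "g \<in> topspace Y \<rightarrow> topspace (topology_generated_by S)"
  proof (rule funcsetI)
    fix x assume "x \<in> topspace Y"
    then have "g x \<in> \<Union>S" by (rule top)
    then show "g x \<in> topspace (topology_generated_by S)" by (simp only: topology_generated_by_topspace)
  qed
next
  fix V assume "openin (topology_generated_by S) V"
  then have "generate_topology_on S V" by (simp add: openin_topology_generated_by_iff)
  then show "openin Y {x \<in> topspace Y. g x \<in> V}"
  proof (induction rule: generate_topology_on.induct)
    case Empty then show ?case by simp
  next
    case (Int a b)
    have "{x \<in> topspace Y. g x \<in> a \<inter> b} = {x \<in> topspace Y. g x \<in> a} \<inter> {x \<in> topspace Y. g x \<in> b}" by auto
    then show ?case using Int by auto
  next
    case (UN K)
    have "{x \<in> topspace Y. g x \<in> \<Union>K} = (\<Union>k\<in>K. {x \<in> topspace Y. g x \<in> k})" by auto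
    then show ?case using UN by (auto intro: openin_Union)
  next
    case (Basis s) then show ?case using op by simp
  qed
qed

lemma Kx_compact: "compactin cantor_top (Kx x)"
  using Kx_closed compactin_cantor by blast

lemma Kx_cont: "continuous_map cantor_top (vietoris cantor_top) Kx"
  unfolding vietoris_def
proof (rule continuous_map_generated)
  fix x
  show "Kx x \<in> \<Union>({{K. compactin cantor_top K \<and> K \<subseteq> U} | U. openin cantor_top U} \<union>
      {{K. compactin cantor_top K \<and> K \<inter> U \<noteq> {}} | U. openin cantor_top U})"
    using Kx_compact[of x] openin_topspace[of cantor_top] by auto
next
  fix s assume "s \<in> {{K. compactin cantor_top K \<and> K \<subseteq> U} | U. openin cantor_top U} \<union>
      {{K. compactin cantor_top K \<and> K \<inter> U \<noteq> {}} | U. openin cantor_top U}"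
  then obtain U where U: "openin cantor_top U"
    and s: "s = {K. compactin cantor_top K \<and> K \<subseteq> U} \<or> s = {K. compactin cantor_top K \<and> K \<inter> U \<noteq> {}}"
    by blast
  from s show "openin cantor_top {x \<in> topspace cantor_top. Kx x \<in> s}"
  proof
    assume "s = {K. compactin cantor_top K \<and> K \<subseteq> U}"
    then have "{x \<in> topspace cantor_top. Kx x \<in> s} = {x. Kx x \<subseteq> U}" using Kx_compact by auto
    then show ?thesis using Kx_open1[OF U] by simp
  next
    assume "s = {K. compactin cantor_top K \<and> K \<inter> U \<noteq> {}}"
    then have "{x \<in> topspace cantor_top. Kx x \<in> s} = {x. Kx x \<inter> U \<noteq> {}}" using Kx_compact by auto
    then show ?thesis using Kx_open2[OF U] by simp
  qed
qed

abbreviation "z0 \<equiv> (\<lambda>_::nat. False)"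

lemma g_cont: "continuous_map cantor_top XX (\<lambda>x. (z0, Kx x))"
proof (rule continuous_map_pairedI)
  show "continuous_map cantor_top cantor_top (\<lambda>x. z0)"
    by (rule iffD2[OF continuous_map_const]) simp
  show "continuous_map cantor_top (vietoris cantor_top) Kx" by (rule Kx_cont)
qed

lemma uu_fin:
  assumes "\<forall>k\<ge>n. \<not> x k" shows "uu (z0, Kx x) n = 1"
proof -
  have "Kx x \<inter> cyl z0 n = cyl z0 n"
  proof (intro set_eqI iffI)
    fix y assume y: "y \<in> cyl z0 n"
    have "\<forall>k. y k \<and> (\<forall>i<k. \<not> y i) \<longrightarrow> \<not> x k"
    proof (intro allI impI)
      fix k assume yk: "y k \<and> (\<forall>i<k. \<not> y i)"
      have "n \<le> k"
      proof (rule ccontr)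
        assume "\<not> n \<le> k"
        then have "k < n" by simp
        then have "\<not> y k" using y unfolding cyl_def by simp
        then show False using yk by simp
      qed
      then show "\<not> x k" using assms by simp
    qed
    then have "y \<in> Kx x" unfolding Kx_def by blast
    then show "y \<in> Kx x \<inter> cyl z0 n" using y by blast
  next
    fix y assume "y \<in> Kx x \<inter> cyl z0 n" then show "y \<in> cyl z0 n" by blast
  qed
  moreover have "measure coin (cyl z0 n) \<noteq> 0" using cyl_pos[of z0 n] by simp
  ultimately show ?thesis unfolding uu_def by simp
qed

lemma uu_one:
  assumes "x n" shows "uu (z0, Kx x) n \<le> 1/2"
proof -
  have sub: "Kx x \<inter> cyl z0 n \<subseteq> cyl z0 (Suc n)"
  proof
    fix y assume y: "y \<in> Kx x \<inter> cyl z0 n"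
    have yb: "\<forall>i<n. \<not> y i" using y unfolding cyl_def by simp
    have "\<not> y n"
    proof
      assume "y n"
      then have "\<not> x n" using Kx_first[of y n x] yb y by blast
      then show False using assms by simp
    qed
    then have "\<forall>i<Suc n. \<not> y i" using yb less_Suc_eq by auto
    then show "y \<in> cyl z0 (Suc n)" unfolding cyl_def by simp
  qed
  have "measure coin (Kx x \<inter> cyl z0 n) \<le> measure coin (cyl z0 (Suc n))"
    by (rule C.finite_measure_mono[OF sub cyl_sets])
  then have le: "measure coin (Kx x \<inter> cyl z0 n) \<le> (1/2)^(Suc n)" by (simp only: cyl_measure)
  have pos: "(0::real) < (1/2)^n" by simp
  have "uu (z0, Kx x) n = measure coin (Kx x \<inter> cyl z0 n) / (1/2)^n"
    unfolding uu_def by (simp only: fst_conv snd_conv cyl_measure)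
  also have "\<dots> \<le> (1/2)^(Suc n) / (1/2)^n" using le pos by (rule divide_right_mono[OF _ less_imp_le])
  also have "\<dots> = 1/2" using pos by simp
  finally show ?thesis .
qed

lemma FF_Kx: "FF (z0, Kx x) < 1 \<longleftrightarrow> infinite {k. x k}"
proof -
  let ?p = "(z0, Kx x)"
  have "FF ?p < 1 \<longleftrightarrow> ereal (FF ?p) < ereal 1" by simp
  also have "\<dots> \<longleftrightarrow> liminf (\<lambda>n. ereal (uu ?p n)) < ereal 1" by (simp only: FF_eq)
  also have "\<dots> \<longleftrightarrow> (\<exists>q\<in>\<rat>. q < 1 \<and> (\<forall>m. \<exists>n\<ge>m. uu ?p n < q))"
    by (rule liminf_lt_iff) (rule uu_bounds)
  also have "\<dots> \<longleftrightarrow> infinite {k. x k}"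
  proof
    assume "\<exists>q\<in>\<rat>. q < 1 \<and> (\<forall>m. \<exists>n\<ge>m. uu ?p n < q)"
    then obtain q where q: "q < 1" "\<forall>m. \<exists>n\<ge>m. uu ?p n < q" by blast
    show "infinite {k. x k}"
    proof
      assume "finite {k. x k}"
      then obtain N where N: "{k. x k} \<subseteq> {..<N}" using finite_nat_bounded by blast
      obtain n where n: "n \<ge> N" "uu ?p n < q" using q(2) by blast
      have "\<forall>k\<ge>n. \<not> x k"
      proof (intro allI impI)
        fix k assume "n \<le> k"
        then have "k \<notin> {..<N}" using n(1) by simp
        then show "\<not> x k" using N by blast
      qed
      then have "uu ?p n = 1" by (rule uu_fin)
      then show False using n(2) q(1) by simp
    qed
  next
    assume inf: "infinite {k. x k}"
    have "\<forall>m. \<exists>n\<ge>m. uu ?p n < 3/4"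
    proof
      fix m
      obtain n where n: "n \<ge> m" "n \<in> {k. x k}" using inf unfolding infinite_nat_iff_unbounded_le by blast
      then have "uu ?p n \<le> 1/2" using uu_one[of x n] by simp
      then have "uu ?p n < 3/4" by simp
      then show "\<exists>n\<ge>m. uu ?p n < 3/4" using n(1) by blast
    qed
    moreover have "(3/4::real) \<in> \<rat>" by simp
    moreover have "(3/4::real) < 1" by simp
    ultimately show "\<exists>q\<in>\<rat>. q < 1 \<and> (\<forall>m. \<exists>n\<ge>m. uu ?p n < q)" by blast
  qed
  finally show ?thesis .
qed


theorem corollary3p5:
  defines "X \<equiv> prod_topology cantor_top (vietoris cantor_top)"
      and "f \<equiv> (\<lambda>(z, K). lower_density K z)"
  shows "(\<forall>p\<in>topspace X. f p \<in> {0..1}) \<and> baire_class X 2 f \<and> \<not> baire_class X 1 f"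
proof -
  have fF: "f p = FF p" for p
  proof -
    obtain z K where p: "p = (z, K)" by force
    then have "f p = lower_density K z" by (simp add: f_def)
    also have "\<dots> = FF p" using ld_eq[of p] p by simp
    finally show ?thesis .
  qed
  have P1: "\<forall>p\<in>topspace X. f p \<in> {0..1}"
  proof
    fix p show "f p \<in> {0..1}" using FF_01[of p] by (simp add: fF)
  qed
  have P2: "baire_class X 2 f" unfolding baire_class_def
  proof (intro allI impI)
    fix U :: "real set" assume U: "open U"
    have "{x \<in> topspace X. f x \<in> U} = {p \<in> topspace XX. FF p \<in> U}"
      unfolding X_def by (simp only: fF)
    then show "{x \<in> topspace X. f x \<in> U} \<in> sigma0 X (Suc 2)"
      using upper[OF U] unfolding X_def by (simp only:)
  qed
  have P3: "\<not> baire_class X 1 f"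
  proof
    assume B: "baire_class X 1 f"
    have "open {..<(1::real)}" by (rule open_lessThan)
    then have "{x \<in> topspace X. f x \<in> {..<1}} \<in> sigma0 X (Suc 1)"
      using B unfolding baire_class_def by blast
    then have S: "{p \<in> topspace XX. f p \<in> {..<1}} \<in> sigma0 XX (Suc 1)"
      unfolding X_def by (simp only:)
    have "{x \<in> topspace cantor_top. (z0, Kx x) \<in> {p \<in> topspace XX. f p \<in> {..<1}}} \<in> sigma0 cantor_top (Suc 1)"
      by (rule sigma0_preimage[OF g_cont S])
    moreover have "{x \<in> topspace cantor_top. (z0, Kx x) \<in> {p \<in> topspace XX. f p \<in> {..<1}}} =
        {x::nat \<Rightarrow> bool. infinite {k. x k}}"
    proof (intro set_eqI)
      fix x :: "nat \<Rightarrow> bool"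
      have "(z0, Kx x) \<in> topspace XX" using Kx_compact[of x] by (simp add: top_viet)
      moreover have "f (z0, Kx x) \<in> {..<1} \<longleftrightarrow> infinite {k. x k}"
        using FF_Kx[of x] by (simp add: fF)
      ultimately show "x \<in> {x \<in> topspace cantor_top. (z0, Kx x) \<in> {p \<in> topspace XX. f p \<in> {..<1}}} \<longleftrightarrow>
          x \<in> {x::nat \<Rightarrow> bool. infinite {k. x k}}" by simp
    qed
    ultimately have "{x::nat \<Rightarrow> bool. infinite {k. x k}} \<in> sigma0 cantor_top (Suc (Suc 0))"
      by simp
    then show False using Q_not by blast
  qed
  show ?thesis using P1 P2 P3 by blast
qed


end
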